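(* In the setting below, under the persistent excitation assumption and the inexact disturbance bound assumption, the fixed-complexity parameter set $\Theta_t$ with periodic update converges with probability 1 to a subset of $\{\theta\in\mathbb{R}^p: M_\Theta(\theta-\theta^\ast)\le(\rho N_u\tau/\beta)\mathbf{1}\}$; that is, with probability 1, $\bigcap_{t\ge0}\Theta_t\subseteq\{\theta: M_\Theta(\theta-\theta^\ast)\le(\rho N_u\tau/\beta)\mathbf{1}\}$.
   Context: Setting: $\theta^\ast\in\mathbb{R}^p$ is a fixed (unknown) parameter vector. $\mathcal{W}=\{w\in\mathbb{R}^{n_x}:\Pi_w w\le\pi_w\}$ is a compact convex polytope with $\pi_w>0$. The disturbances $w_0,w_1,\dots$ are independent random vectors in $\mathbb{R}^{n_x}$. $D_0,D_1,\dots\in\mathbb{R}^{n_x\times p}$ is a given (non-random) sequence of regressor matrices. For $t\ge1$ the (random) unfalsified parameter set is $\Delta_t=\{\theta\in\mathbb{R}^p: D_{t-1}(\theta^\ast-\theta)+w_{t-1}\in\mathcal{W}\}$. $\|\cdot\|$ is the Euclidean norm (induced 2-norm for matrices); $\mathcal{B}=\{x\in\mathbb{R}^{n_x}:\|x\|\le1\}$; $\oplus$ is Minkowski sum; $\mathbf{1}$ is the vector of ones; vector inequalities are componentwise. Persistent excitation assumption: there exist $\tau>0$, $\beta>0$ and an integer $N_u\ge\lceil p/n_x\rceil$ such that for every $t\ge0$, $\|D_t\|\le\tau$ and $\sum_{j=t}^{t+N_u-1}D_j^\top D_j\succeq\beta I$. Inexact disturbance bound assumption: there exist a compact set $\Omega\subset\mathbb{R}^{n_x}$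 and $\rho>0$ with $\Omega\subseteq\mathcal{W}\subseteq\Omega\oplus\rho\mathcal{B}$, such that $w_t\in\Omega$ for all $t$, and a function $p_w:(0,\infty)\to(0,1]$ such that for all $w^0\in\partial\Omega$ (boundary of $\Omega$), all $\epsilon>0$ and all $t\ge0$, $\Pr\{\|w_t-w^0\|<\epsilon\}\ge p_w(\epsilon)$. Fixed-complexity parameter set with periodic update: $M_\Theta\in\mathbb{R}^{r\times p}$ has rows of unit Euclidean norm and is such that $\Theta(\mu):=\{\theta:M_\Theta\theta\le\mu\}$ is bounded for every $\mu\in\mathbb{R}^r$; $\Theta_0=\Theta(\mu_0)$ contains $\theta^\ast$. For $t\ge1$: if $t=kN_u$ for some integer $k\ge1$, then $\Theta_t=\Theta(\mu_t)$ with $[\mu_t]_i=\max\{[M_\Theta]_i\theta:\theta\in\Theta_{t-N_u}\cap\bigcap_{j=t-N_u+1}^t\Delta_j\}$ for $i=1,\dots,r$; otherwise $\Theta_t=\Theta_{t-1}$. *)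

theory Defs
  imports "HOL-Analysis.Analysis" "HOL-Probability.Probability"
begin

text \<open>Vector inequalities on real^'n are componentwise (library order on vec).
  Vectors in R^n are real^'n; an n_x x p matrix is real^'p^'nx.\<close>

definition polytope_set :: "real^'nx^'m \<Rightarrow> real^'m \<Rightarrow> (real^'nx) set" where
  "polytope_set Pw pw = {x. Pw *v x \<le> pw}"

definition Theta_set :: "real^'p^'r \<Rightarrow> real^'r \<Rightarrow> (real^'p) set" where
  "Theta_set MT mu = {\<theta>. MT *v \<theta> \<le> mu}"

text \<open>Unfalsified set Delta_t for t \<ge> 1 (depends on the realisation w_{t-1}).\<close>
definition Delta_set ::
  "(real^'nx) set \<Rightarrow> (nat \<Rightarrow> real^'p^'nx) \<Rightarrow> real^'p \<Rightarrow> (nat \<Rightarrow> real^'nx) \<Rightarrow> nat \<Rightarrow> (real^'p) set" where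
  "Delta_set W D th w t = {\<theta>. D (t - 1) *v (th - \<theta>) + w (t - 1) \<in> W}"

text \<open>mu_k is the bound vector after the k-th periodic update (time k*Nu).\<close>
fun mu_seq ::
  "(real^'nx) set \<Rightarrow> (nat \<Rightarrow> real^'p^'nx) \<Rightarrow> real^'p \<Rightarrow> real^'p^'r \<Rightarrow> real^'r \<Rightarrow> nat
     \<Rightarrow> (nat \<Rightarrow> real^'nx) \<Rightarrow> nat \<Rightarrow> real^'r" where
  "mu_seq W D th MT mu0 Nu w 0 = mu0"
| "mu_seq W D th MT mu0 Nu w (Suc k) =
     (\<chi> i. Sup ((\<lambda>\<theta>. (MT $ i) \<bullet> \<theta>) `
        (Theta_set MT (mu_seq W D th MT mu0 Nu w k) \<inter>
         (\<Inter>j\<in>{k*Nu+1..(Suc k)*Nu}. Delta_set W D th w j))))"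

definition Theta_t ::
  "(real^'nx) set \<Rightarrow> (nat \<Rightarrow> real^'p^'nx) \<Rightarrow> real^'p \<Rightarrow> real^'p^'r \<Rightarrow> real^'r \<Rightarrow> nat
     \<Rightarrow> (nat \<Rightarrow> real^'nx) \<Rightarrow> nat \<Rightarrow> (real^'p) set" where
  "Theta_t W D th MT mu0 Nu w t = Theta_set MT (mu_seq W D th MT mu0 Nu w (t div Nu))"

end

theory Submission
  imports Defs
begin


lemma solve_pd:
  fixes G :: "real^'p^'p" and m :: "real^'p"
  assumes pd: "\<forall>x. x \<bullet> (G *v x) \<ge> \<beta> * (x \<bullet> x)" and b: "\<beta> > 0"
  shows "\<exists>u. G *v u = m \<and> norm u \<le> norm m / \<beta>"
proof -
  have inj: "inj ((*v) G)"
  proof (rule injI)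
    fix x y assume "G *v x = G *v y"
    then have "G *v (x - y) = 0" by (simp add: matrix_vector_mult_diff_distrib)
    with pd[rule_format, of "x-y"] b have "(x-y) \<bullet> (x-y) \<le> 0"
      by (simp add: mult_le_0_iff)
    then show "x = y" by (metis eq_iff_diff_eq_0 inner_gt_zero_iff not_le)
  qed
  then have "surj ((*v) G)" using full_rank_injective full_rank_surjective by metis
  then obtain u where u: "G *v u = m" by (metis surjD)
  have "\<beta> * (norm u)^2 \<le> u \<bullet> m" using pd[rule_format, of u] u by (simp add: power2_norm_eq_inner)
  also have "\<dots> \<le> norm u * norm m" by (rule norm_cauchy_schwarz)
  finally have "\<beta> * norm u * norm u \<le> norm m * norm u" by (simp add: power2_eq_square mult_ac)
  then have "\<beta> * norm u \<le> norm m"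
    by (cases "norm u = 0") (auto simp: mult_le_cancel_right mult.assoc mult.left_commute)
  then show ?thesis using u b by (auto simp: field_simps)
qed

lemma support_point:
  fixes \<Omega> :: "(real^'n) set"
  assumes "compact \<Omega>" "\<Omega> \<noteq> {}"
  shows "\<exists>x\<in>frontier \<Omega>. \<forall>y\<in>\<Omega>. v \<bullet> y \<le> v \<bullet> x"
proof -
  have gen: "\<exists>x\<in>frontier \<Omega>. \<forall>y\<in>\<Omega>. v' \<bullet> y \<le> v' \<bullet> x" if "v' \<noteq> 0" for v'
  proof -
    obtain x where x: "x \<in> \<Omega>" "\<forall>y\<in>\<Omega>. v' \<bullet> y \<le> v' \<bullet> x"
      using continuous_attains_sup[OF assms, of "\<lambda>y. v' \<bullet> y"] continuous_on_inner[OF continuous_on_const continuous_on_id]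
      by blast
    have "x \<notin> interior \<Omega>"
    proof
      assume "x \<in> interior \<Omega>"
      then obtain d where d: "d > 0" "ball x d \<subseteq> \<Omega>" by (meson open_contains_ball open_interior interior_subset subset_trans)
      let ?y = "x + (d / 2 / norm v') *\<^sub>R v'"
      have "?y \<in> ball x d" using d that by (simp add: dist_norm)
      then have "v' \<bullet> ?y \<le> v' \<bullet> x" using d x by auto
      moreover have "v' \<bullet> ?y = v' \<bullet> x + d/2 * norm v'"
        using that by (simp add: inner_add_right power2_norm_eq_inner[symmetric] power2_eq_square)
      ultimately show False using d that by (simp add: mult_le_0_iff)
    qed
    then have "x \<in> frontier \<Omega>" using x compact_imp_closed[OF assms(1)]
      by (simp add: frontier_def closure_closed)
    then show ?thesis using x by blast
  qed
  show ?thesis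
  proof (cases "v = 0")
    case True
    obtain x where "x \<in> frontier \<Omega>" using gen[of "axis undefined 1"] by (auto simp: axis_eq_0_iff)
    then show ?thesis using True by auto
  next
    case False then show ?thesis using gen by blast
  qed
qed

lemma sum_mv: "(sum f S) *v (u::real^'p) = sum (\<lambda>j. f j *v u) S"
  by (induction S rule: infinite_finite_induct) (auto simp: matrix_vector_mult_add_rdistrib)

lemma inner_DD: "(D *v u) \<bullet> (D *v e) = ((transpose D ** D) *v u) \<bullet> (e::real^'p)"
  by (simp add: matrix_vector_mul_assoc[symmetric] dot_lmul_matrix)



lemma block_AE:
  fixes w :: "nat \<Rightarrow> 's \<Rightarrow> real^'n" and c :: "nat \<Rightarrow> real^'n"
  assumes P: "prob_space M" and ind: "prob_space.indep_vars M (\<lambda>_. borel) w UNIV"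
    and Nu: "Nu > 0" and q: "q > 0"
    and pr: "\<forall>t. measure M {s\<in>space M. norm (w t s - c t) < \<epsilon>} \<ge> q"
  shows "AE s in M. \<exists>k. \<forall>t\<in>{k*Nu..<k*Nu+Nu}. norm (w t s - c t) < \<epsilon>"
proof -
  interpret prob_space M by (rule P)
  define B where "B k = {k*Nu..<k*Nu+Nu}" for k
  have finB: "finite (B k)" "B k \<noteq> {}" "card (B k) = Nu" for k using Nu by (auto simp: B_def)
  have disj: "disjoint_family_on B UNIV"
    unfolding disjoint_family_on_def B_def
  proof (intro ballI impI)
    fix m n :: nat assume "m \<noteq> n"
    then consider "m < n" | "n < m" by linarith
    then show "{m * Nu..<m * Nu + Nu} \<inter> {n * Nu..<n * Nu + Nu} = {}"
    proof cases
      case 1 then have "m*Nu + Nu \<le> n * Nu" by (metis Suc_leI add.commute mult_Suc mult_le_mono1)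
      then show ?thesis by auto
    next
      case 2 then have "n*Nu + Nu \<le> m * Nu" by (metis Suc_leI add.commute mult_Suc mult_le_mono1)
      then show ?thesis by auto
    qed
  qed
  have rv: "w t \<in> borel_measurable M" for t using ind unfolding indep_vars_def by auto
  have ind2: "indep_vars (\<lambda>k. PiM (B k) (\<lambda>_. borel)) (\<lambda>k \<omega>. restrict (\<lambda>i. w i \<omega>) (B k)) UNIV"
    by (rule indep_vars_restrict[OF ind _ disj]) auto
  define F where "F k = {s\<in>space M. \<not>(\<forall>t\<in>B k. norm (w t s - c t) < \<epsilon>)}" for k
  define E where "E k = {s\<in>space M. \<forall>t\<in>B k. norm (w t s - c t) < \<epsilon>}" for k
  have predB: "{x\<in>space (PiM (B k) (\<lambda>_. borel)). \<not>(\<forall>t\<in>B k. norm (x t - c t) < \<epsilon>)} \<in> sets (PiM (B k) (\<lambda>_. borel))" for k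
  proof -
    have "Measurable.pred (PiM (B k) (\<lambda>_. borel)) (\<lambda>x. \<not>(\<forall>t\<in>B k. norm (x t - c t) < \<epsilon>))"
      using finB(1)[of k] by measurable
    then show ?thesis by (simp add: pred_def)
  qed
  have indF: "indep_events F UNIV"
  proof -
    have "indep_events (\<lambda>k. {x\<in>space M. \<not>(\<forall>t\<in>B k. norm (restrict (\<lambda>i. w i x) (B k) t - c t) < \<epsilon>)}) UNIV"
      by (rule indep_eventsI_indep_vars[OF ind2 predB])
    moreover have "(\<lambda>k. {x\<in>space M. \<not>(\<forall>t\<in>B k. norm (restrict (\<lambda>i. w i x) (B k) t - c t) < \<epsilon>)}) = F"
      by (auto simp: F_def fun_eq_iff)
    ultimately show ?thesis by simp
  qed
  have Eev: "E k \<in> events" for k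
  proof -
    have "Measurable.pred M (\<lambda>s. \<forall>t\<in>B k. norm (w t s - c t) < \<epsilon>)"
      using finB(1)[of k] rv by measurable
    then show ?thesis by (simp add: E_def pred_def)
  qed
  have FE: "F k = space M - E k" for k by (auto simp: F_def E_def)
  have PEk: "prob (E k) \<ge> q ^ Nu" for k
  proof -
    have "E k = (\<Inter>t\<in>B k. w t -` {x. norm (x - c t) < \<epsilon>} \<inter> space M)"
      using finB(2)[of k] by (auto simp: E_def)
    then have "prob (E k) = (\<Prod>t\<in>B k. prob (w t -` {x. norm (x - c t) < \<epsilon>} \<inter> space M))"
      using indep_varsD[OF ind finB(2) finB(1), where A="\<lambda>t. {x. norm (x - c t) < \<epsilon>}"]
      by (auto intro!: borel_open open_Collect_less continuous_intros)
    also have "\<dots> \<ge> (\<Prod>t\<in>B k. q)"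
    proof (rule prod_mono)
      fix t assume "t \<in> B k"
      have "w t -` {x. norm (x - c t) < \<epsilon>} \<inter> space M = {s\<in>space M. norm (w t s - c t) < \<epsilon>}" by auto
      then show "0 \<le> q \<and> q \<le> prob (w t -` {x. norm (x - c t) < \<epsilon>} \<inter> space M)"
        using pr q by auto
    qed
    finally show ?thesis using finB(3)[of k] by simp
  qed
  define a where "a = 1 - q ^ Nu"
  have a1: "a < 1" using q by (simp add: a_def)
  have PF: "prob (F k) \<le> a" "0 \<le> prob (F k)" for k
    using PEk[of k] by (auto simp: FE prob_compl[OF Eev] a_def)
  define Z where "Z = (\<Inter>k. F k)"
  have Fev: "F k \<in> events" for k using FE Eev by auto
  have Zev: "Z \<in> events" unfolding Z_def using Fev by auto
  have bound: "prob Z \<le> a ^ K" if "K > 0" for K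
  proof -
    have "prob Z \<le> prob (\<Inter>k\<in>{..<K}. F k)"
      by (rule finite_measure_mono) (auto simp: Z_def Fev intro!: sets.finite_INT that)
    also have "\<dots> = (\<Prod>k\<in>{..<K}. prob (F k))"
      using indF that unfolding indep_events_def by (auto simp: lessThan_empty_iff)
    also have "\<dots> \<le> (\<Prod>k\<in>{..<K}. a)"
      by (rule prod_mono) (use PF in auto)
    finally show ?thesis by simp
  qed
  have "prob Z = 0"
  proof (rule ccontr)
    assume "prob Z \<noteq> 0"
    then have "prob Z > 0" using measure_nonneg[of M Z] by linarith
    then obtain K where K: "a ^ K < prob Z" using real_arch_pow_inv[OF _ a1] by blast
    have "K \<noteq> 0"
    proof
      assume "K = 0"
      then have "a ^ K = 1" by (simp only: power_0)
      then have "1 < prob Z" using K by metis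
      then show False using prob_le_1[of Z] by (meson not_less)
    qed
    then have "K > 0" by simp
    then have "prob Z \<le> a ^ K" by (rule bound)
    then show False using K by linarith
  qed
  then have "Z \<in> null_sets M" using Zev by (simp add: null_sets_def emeasure_eq_measure)
  moreover have "{s\<in>space M. \<not>(\<exists>k. \<forall>t\<in>{k*Nu..<k*Nu+Nu}. norm (w t s - c t) < \<epsilon>)} \<subseteq> Z"
    by (auto simp: Z_def F_def B_def)
  ultimately show ?thesis by (rule AE_I')
qed



lemma mv_row: "(A *v x) $ i = (A $ i) \<bullet> (x::real^'n)"
  by (simp add: matrix_vector_mult_def inner_vec_def mult.commute)

lemma th_in_all:
  fixes th :: "real^'p" and MT :: "real^'p^'r" and D :: "nat \<Rightarrow> real^'p^'nx"
  assumes bnd: "\<forall>mu. bounded (Theta_set MT mu)"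
    and th_in: "th \<in> Theta_set MT mu0"
    and ws: "\<forall>t. ws t \<in> W"
  shows "th \<in> Theta_set MT (mu_seq W D th MT mu0 Nu ws k)"
proof (induction k)
  case 0 then show ?case using th_in by simp
next
  case (Suc k)
  define S where "S = Theta_set MT (mu_seq W D th MT mu0 Nu ws k) \<inter>
         (\<Inter>j\<in>{k*Nu+1..(Suc k)*Nu}. Delta_set W D th ws j)"
  have thS: "th \<in> S" using Suc ws by (simp add: S_def Delta_set_def)
  have "(mu_seq W D th MT mu0 Nu ws (Suc k)) $ i \<ge> (MT $ i) \<bullet> th" for i
  proof -
    have "bounded ((\<lambda>\<theta>. (MT $ i) \<bullet> \<theta>) ` S)"
      by (rule bounded_linear_image[OF bounded_subset[OF bnd[rule_format]]])
         (auto simp: S_def bounded_linear_inner_right)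
    then have "bdd_above ((\<lambda>\<theta>. (MT $ i) \<bullet> \<theta>) ` S)" by (rule bounded_imp_bdd_above)
    then have "(MT $ i) \<bullet> th \<le> Sup ((\<lambda>\<theta>. (MT $ i) \<bullet> \<theta>) ` S)"
      using thS by (intro cSup_upper) auto
    then show ?thesis by (simp add: S_def)
  qed
  then show ?case by (simp add: Theta_set_def less_eq_vec_def mv_row)
qed

lemma det_bound:
  fixes th :: "real^'p" and MT :: "real^'p^'r" and D :: "nat \<Rightarrow> real^'p^'nx"
    and ws c :: "nat \<Rightarrow> real^'nx" and u :: "real^'p"
  assumes Nu: "Nu > 0"
    and Dn: "\<forall>t x. norm (D t *v x) \<le> \<tau> * norm x" and tau: "\<tau> > 0" and beta: "\<beta> > 0"
    and rho: "\<rho> > 0" and eps: "\<epsilon> > 0"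
    and Wsub: "W \<subseteq> {a + b | a b. a \<in> \<Omega> \<and> norm b \<le> \<rho>}"
    and ws: "\<forall>t. ws t \<in> W"
    and th_in: "th \<in> Theta_set MT (mu_seq W D th MT mu0 Nu ws k)"
    and Gu: "(\<Sum>j\<in>{k*Nu..k*Nu+Nu-1}. transpose (D j) ** D j) *v u = - (MT $ i)"
    and un: "norm u \<le> 1 / \<beta>"
    and cmax: "\<forall>t\<in>{k*Nu..<k*Nu+Nu}. \<forall>y\<in>\<Omega>. (D t *v u) \<bullet> y \<le> (D t *v u) \<bullet> c t"
    and close: "\<forall>t\<in>{k*Nu..<k*Nu+Nu}. norm (ws t - c t) < \<epsilon>"
  shows "mu_seq W D th MT mu0 Nu ws (Suc k) $ i \<le> (MT $ i) \<bullet> th + Nu * (\<tau> * (\<rho> + \<epsilon>) / \<beta>)"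
proof -
  define S where "S = Theta_set MT (mu_seq W D th MT mu0 Nu ws k) \<inter>
         (\<Inter>j\<in>{k*Nu+1..(Suc k)*Nu}. Delta_set W D th ws j)"
  have thS: "th \<in> S" using th_in ws by (simp add: S_def Delta_set_def)
  have blk: "{k*Nu..k*Nu+Nu-1} = {k*Nu..<k*Nu+Nu}" using Nu by auto
  have key: "(MT $ i) \<bullet> \<theta> \<le> (MT $ i) \<bullet> th + Nu * (\<tau> * (\<rho> + \<epsilon>) / \<beta>)" if "\<theta> \<in> S" for \<theta>
  proof -
    define e where "e = th - \<theta>"
    have each: "(D t *v u) \<bullet> (D t *v e) \<le> \<tau> * (\<rho> + \<epsilon>) / \<beta>" if t: "t \<in> {k*Nu..<k*Nu+Nu}" for t
    proof -
      have "Suc t \<in> {k*Nu+1..(Suc k)*Nu}" using t by auto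
      then have "\<theta> \<in> Delta_set W D th ws (Suc t)" using \<open>\<theta> \<in> S\<close> unfolding S_def by blast
      then have "D t *v e + ws t \<in> W" by (simp add: Delta_set_def e_def)
      then obtain a b where ab: "D t *v e + ws t = a + b" "a \<in> \<Omega>" "norm b \<le> \<rho>" using Wsub by blast
      define v where "v = D t *v u"
      have "v \<bullet> (D t *v e) = v \<bullet> a + v \<bullet> b - v \<bullet> ws t"
        using arg_cong[OF ab(1), of "\<lambda>z. v \<bullet> z"] by (simp add: inner_add_right)
      also have "\<dots> \<le> v \<bullet> c t + norm v * \<rho> - v \<bullet> ws t"
        using cmax t ab v_def norm_cauchy_schwarz[of v b]
        by (smt (verit, best) mult_left_mono norm_ge_zero)
      also have "\<dots> = v \<bullet> (c t - ws t) + norm v * \<rho>" by (simp add: inner_diff_right)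
      also have "\<dots> \<le> norm v * \<epsilon> + norm v * \<rho>"
      proof -
        have "v \<bullet> (c t - ws t) \<le> norm v * norm (c t - ws t)" by (rule norm_cauchy_schwarz)
        also have "\<dots> \<le> norm v * \<epsilon>"
          using close t by (intro mult_left_mono) (auto simp: norm_minus_commute less_imp_le)
        finally show ?thesis by simp
      qed
      also have "\<dots> = norm v * (\<rho> + \<epsilon>)" by (simp add: algebra_simps)
      also have "\<dots> \<le> (\<tau> * norm u) * (\<rho> + \<epsilon>)"
        using Dn rho eps v_def by (intro mult_right_mono) auto
      also have "\<dots> \<le> (\<tau> * (1 / \<beta>)) * (\<rho> + \<epsilon>)"
        using un tau rho eps by (intro mult_right_mono mult_left_mono) auto
      finally show ?thesis by (simp add: v_def)
    qed
    have "(MT $ i) \<bullet> \<theta> - (MT $ i) \<bullet> th = (- (MT $ i)) \<bullet> e"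
      by (simp add: e_def inner_diff_right)
    also have "\<dots> = (\<Sum>j\<in>{k*Nu..<k*Nu+Nu}. (transpose (D j) ** D j) *v u) \<bullet> e"
      using Gu blk by (simp add: sum_mv)
    also have "\<dots> = (\<Sum>j\<in>{k*Nu..<k*Nu+Nu}. (D j *v u) \<bullet> (D j *v e))"
      by (simp add: inner_sum_left inner_DD)
    also have "\<dots> \<le> (\<Sum>j\<in>{k*Nu..<k*Nu+Nu}. \<tau> * (\<rho> + \<epsilon>) / \<beta>)"
      by (rule sum_mono) (rule each)
    also have "\<dots> = Nu * (\<tau> * (\<rho> + \<epsilon>) / \<beta>)" by simp
    finally show ?thesis by simp
  qed
  have "Sup ((\<lambda>\<theta>. (MT $ i) \<bullet> \<theta>) ` S) \<le> (MT $ i) \<bullet> th + Nu * (\<tau> * (\<rho> + \<epsilon>) / \<beta>)"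
    using thS key by (intro cSup_least) auto
  then show ?thesis by (simp add: S_def)
qed



lemma lim_le:
  fixes x A B :: real
  assumes "\<forall>n::nat. x \<le> A + B / real (Suc n)" "B \<ge> 0"
  shows "x \<le> A"
proof (rule ccontr)
  assume "\<not> x \<le> A"
  then have d: "x - A > 0" by simp
  obtain n :: nat where n: "B / (x - A) < real n" using reals_Archimedean2 by blast
  then have "B < real n * (x - A)" using d by (simp add: divide_less_eq)
  also have "\<dots> \<le> real (Suc n) * (x - A)" using d by (intro mult_right_mono) auto
  finally have "B / real (Suc n) < x - A" by (simp add: divide_less_eq mult.commute)
  with assms(1)[rule_format, of n] show False by linarith
qed

theorem corollary5:
  fixes M :: "'s measure"
    and th :: "real^'p"
    and Pi_w :: "real^'nx^'m" and pi_w :: "real^'m"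
    and w :: "nat \<Rightarrow> 's \<Rightarrow> real^'nx"
    and D :: "nat \<Rightarrow> real^'p^'nx"
    and \<tau> \<beta> \<rho> :: real and Nu :: nat
    and \<Omega> :: "(real^'nx) set"
    and p_w :: "real \<Rightarrow> real"
    and MT :: "real^'p^'r" and mu0 :: "real^'r"
  assumes prob: "prob_space M"
    and W_compact: "compact (polytope_set Pi_w pi_w)"
    and pi_pos: "\<forall>i. pi_w $ i > 0"
    and indep: "prob_space.indep_vars M (\<lambda>_. borel) w UNIV"
    and tau_pos: "\<tau> > 0" and beta_pos: "\<beta> > 0"
    and Nu_ge: "real Nu \<ge> of_int \<lceil>real CARD('p) / real CARD('nx)\<rceil>"
    and D_bound: "\<forall>t. onorm (\<lambda>x. D t *v x) \<le> \<tau>"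
    and PE: "\<forall>t. \<forall>x::real^'p.
               x \<bullet> ((\<Sum>j\<in>{t..t+Nu-1}. transpose (D j) ** D j) *v x) \<ge> \<beta> * (x \<bullet> x)"
    and Omega_compact: "compact \<Omega>"
    and rho_pos: "\<rho> > 0"
    and Omega_sub: "\<Omega> \<subseteq> polytope_set Pi_w pi_w"
    and W_sub: "polytope_set Pi_w pi_w \<subseteq> {a + b | a b. a \<in> \<Omega> \<and> norm b \<le> \<rho>}"
    and w_in: "\<forall>t. \<forall>s\<in>space M. w t s \<in> \<Omega>"
    and pw_range: "\<forall>\<epsilon>>0. 0 < p_w \<epsilon> \<and> p_w \<epsilon> \<le> 1"
    and pw_bound: "\<forall>w0\<in>frontier \<Omega>. \<forall>\<epsilon>>0. \<forall>t.
               measure M {s\<in>space M. norm (w t s - w0) < \<epsilon>} \<ge> p_w \<epsilon>"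
    and MT_rows: "\<forall>i. norm (MT $ i) = 1"
    and MT_bounded: "\<forall>mu. bounded (Theta_set MT mu)"
    and th_in: "th \<in> Theta_set MT mu0"
  shows "AE s in M. (\<Inter>t. Theta_t (polytope_set Pi_w pi_w) D th MT mu0 Nu (\<lambda>k. w k s) t)
           \<subseteq> {\<theta>. MT *v (\<theta> - th) \<le> (\<chi> i. \<rho> * real Nu * \<tau> / \<beta>)}"
proof -
  interpret prob_space M by (rule prob)
  define W where "W = polytope_set Pi_w pi_w"
  have Nu: "Nu > 0"
  proof -
    have "real CARD('p) / real CARD('nx) > 0" by simp
    moreover have "real CARD('p) / real CARD('nx) \<le> of_int \<lceil>real CARD('p) / real CARD('nx)\<rceil>"
      by (rule le_of_int_ceiling)
    ultimately show ?thesis using Nu_ge by linarith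
  qed
  have Dn: "\<forall>t x. norm (D t *v x) \<le> \<tau> * norm x"
  proof (intro allI)
    fix t x
    have "norm (D t *v x) \<le> onorm (\<lambda>x. D t *v x) * norm x"
      by (rule onorm) (rule matrix_vector_mul_bounded_linear)
    also have "\<dots> \<le> \<tau> * norm x" using D_bound by (intro mult_right_mono) auto
    finally show "norm (D t *v x) \<le> \<tau> * norm x" .
  qed
  obtain s0 where "s0 \<in> space M" using not_empty by blast
  then have Ome: "\<Omega> \<noteq> {}" using w_in by blast
  define G where "G k = (\<Sum>j\<in>{k*Nu..k*Nu+Nu-1}. transpose (D j) ** D j)" for k
  define U where "U i k = (SOME u. G k *v u = - (MT $ i) \<and> norm u \<le> 1 / \<beta>)" for i k
  have U: "G k *v U i k = - (MT $ i) \<and> norm (U i k) \<le> 1 / \<beta>" for i k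
  proof -
    have "\<exists>u. G k *v u = - (MT $ i) \<and> norm u \<le> norm (- (MT $ i)) / \<beta>"
      unfolding G_def by (rule solve_pd[OF _ beta_pos]) (use PE in blast)
    then have "\<exists>u. G k *v u = - (MT $ i) \<and> norm u \<le> 1 / \<beta>" using MT_rows by simp
    then show ?thesis unfolding U_def by (rule someI_ex)
  qed
  define c where "c i t = (SOME x. x \<in> frontier \<Omega> \<and>
      (\<forall>y\<in>\<Omega>. (D t *v U i (t div Nu)) \<bullet> y \<le> (D t *v U i (t div Nu)) \<bullet> x))" for i t
  have c: "c i t \<in> frontier \<Omega> \<and>
      (\<forall>y\<in>\<Omega>. (D t *v U i (t div Nu)) \<bullet> y \<le> (D t *v U i (t div Nu)) \<bullet> c i t)" for i t
    unfolding c_def by (rule someI_ex) (use support_point[OF Omega_compact Ome] in blast)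
  have ev: "AE s in M. \<exists>k. \<forall>t\<in>{k*Nu..<k*Nu+Nu}. norm (w t s - c i t) < 1 / real (Suc n)" for i n
  proof (rule block_AE[OF prob indep Nu])
    show "p_w (1 / real (Suc n)) > 0" using pw_range by simp
    show "\<forall>t. p_w (1 / real (Suc n)) \<le> measure M {s \<in> space M. norm (w t s - c i t) < 1 / real (Suc n)}"
      using pw_bound c by simp
  qed
  have "AE s in M. \<forall>n. \<forall>i\<in>UNIV. \<exists>k. \<forall>t\<in>{k*Nu..<k*Nu+Nu}. norm (w t s - c i t) < 1 / real (Suc n)"
    unfolding AE_all_countable by (intro allI AE_finite_allI ev) simp
  moreover note AE_space
  ultimately show ?thesis
  proof eventually_elim
    fix s
    assume H: "\<forall>n. \<forall>i\<in>UNIV. \<exists>k. \<forall>t\<in>{k*Nu..<k*Nu+Nu}. norm (w t s - c i t) < 1 / real (Suc n)"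
      and s: "s \<in> space M"
    show "(\<Inter>t. Theta_t (polytope_set Pi_w pi_w) D th MT mu0 Nu (\<lambda>k. w k s) t)
           \<subseteq> {\<theta>. MT *v (\<theta> - th) \<le> (\<chi> i. \<rho> * real Nu * \<tau> / \<beta>)}"
    proof (intro subsetI CollectI)
    fix \<theta>
    assume \<theta>: "\<theta> \<in> (\<Inter>t. Theta_t (polytope_set Pi_w pi_w) D th MT mu0 Nu (\<lambda>k. w k s) t)"
    define ws where "ws = (\<lambda>k. w k s)"
    have ws: "\<forall>t. ws t \<in> W" using w_in s Omega_sub by (auto simp: ws_def W_def)
    have "(MT *v (\<theta> - th)) $ i \<le> (\<chi> i. \<rho> * real Nu * \<tau> / \<beta>) $ i" for i
    proof -
      have "\<forall>n::nat. (MT $ i) \<bullet> \<theta> - (MT $ i) \<bullet> th \<le> \<rho> * real Nu * \<tau> / \<beta> + (Nu * \<tau> / \<beta>) / real (Suc n)"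
      proof
        fix n
        define \<epsilon> where "\<epsilon> = 1 / real (Suc n)"
        have eps: "\<epsilon> > 0" by (simp add: \<epsilon>_def)
        obtain k where k: "\<forall>t\<in>{k*Nu..<k*Nu+Nu}. norm (ws t - c i t) < \<epsilon>"
          using H unfolding ws_def \<epsilon>_def by blast
        have divk: "t div Nu = k" if "t \<in> {k*Nu..<k*Nu+Nu}" for t
          using that by (intro div_nat_eqI) (auto simp: mult.commute)
        have cmax: "\<forall>t\<in>{k*Nu..<k*Nu+Nu}. \<forall>y\<in>\<Omega>. (D t *v U i k) \<bullet> y \<le> (D t *v U i k) \<bullet> c i t"
          using c divk by metis
        have th_k: "th \<in> Theta_set MT (mu_seq W D th MT mu0 Nu ws k)"
          by (rule th_in_all[OF MT_bounded th_in ws])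
        have bnd: "mu_seq W D th MT mu0 Nu ws (Suc k) $ i \<le> (MT $ i) \<bullet> th + Nu * (\<tau> * (\<rho> + \<epsilon>) / \<beta>)"
          by (rule det_bound[OF Nu Dn tau_pos beta_pos rho_pos eps W_sub[folded W_def] ws th_k
                 _ _ cmax k]) (use U[of k i] in \<open>auto simp: G_def\<close>)
        have "\<theta> \<in> Theta_t W D th MT mu0 Nu ws (Suc k * Nu)" using \<theta> by (auto simp: W_def ws_def)
        then have "\<theta> \<in> Theta_set MT (mu_seq W D th MT mu0 Nu ws (Suc k))"
          using Nu by (simp add: Theta_t_def)
        then have "(MT $ i) \<bullet> \<theta> \<le> mu_seq W D th MT mu0 Nu ws (Suc k) $ i"
          by (simp add: Theta_set_def less_eq_vec_def mv_row)
        with bnd have "(MT $ i) \<bullet> \<theta> - (MT $ i) \<bullet> th \<le> Nu * (\<tau> * (\<rho> + \<epsilon>) / \<beta>)" by linarith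
        also have "\<dots> = \<rho> * real Nu * \<tau> / \<beta> + (Nu * \<tau> / \<beta>) * \<epsilon>"
          using beta_pos by (simp add: field_simps)
        also have "\<dots> = \<rho> * real Nu * \<tau> / \<beta> + (Nu * \<tau> / \<beta>) / real (Suc n)"
          by (simp add: \<epsilon>_def)
        finally show "(MT $ i) \<bullet> \<theta> - (MT $ i) \<bullet> th \<le> \<rho> * real Nu * \<tau> / \<beta> + (Nu * \<tau> / \<beta>) / real (Suc n)" .
      qed
      then have "(MT $ i) \<bullet> \<theta> - (MT $ i) \<bullet> th \<le> \<rho> * real Nu * \<tau> / \<beta>"
        by (rule lim_le) (use tau_pos beta_pos in simp)
      then show ?thesis by (simp add: mv_row inner_diff_right)
    qed
    then show "MT *v (\<theta> - th) \<le> (\<chi> i. \<rho> * real Nu * \<tau> / \<beta>)" by (simp add: less_eq_vec_def)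
    qed
  qed
qed


end
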